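(* Let $(\xi_j)_{j\ge 0}$ be independent, identically distributed random variables taking values in $\{-1,0,1\}$ with $\max_{x\in\{-1,0,1\}} \mathbb{P}(\xi_0 = x) < \frac{1}{\sqrt{3}}$, and for $n\ge 1$ let $P(z):=\sum_{j=0}^n \xi_j z^j$. There exists a constant $C>0$ (depending only on the distribution of $\xi_0$) such that for every $n\ge 1$, if $\alpha\in\mathbb{C}$ satisfies $\alpha^k = 1$ for some integer $k\ge 1$, then \[\mathbb{P}(\alpha\text{ is a root of } P')\le \left(\frac{C}{\lfloor n/k\rfloor}\right)^{\frac{3\deg(\alpha)}{2}}.\]
   Context: $P'$ is the derivative of $P$. For an algebraic integer $\alpha$, $\deg(\alpha)$ denotes the degree of its minimal polynomial over $\mathbb{Q}$. *)

theory Defs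
  imports "HOL-Probability.Probability" "HOL-Computational_Algebra.Polynomial"
begin

definition alg_deg :: "complex \<Rightarrow> nat" where
  "alg_deg \<alpha> = (LEAST d. \<exists>q :: rat poly. q \<noteq> 0 \<and> degree q = d \<and>
                          poly (map_poly of_rat q) \<alpha> = 0)"

definition rand_poly :: "nat \<Rightarrow> (nat \<Rightarrow> int) \<Rightarrow> complex poly" where
  "rand_poly n xi = (\<Sum>j\<le>n. monom (of_int (xi j)) j)"

end

theory Submission
  imports Defs
begin


lemma sin_diff_sq: "sin ((x::real) - y)^2 \<le> 2 * (sin x ^2 + sin y ^2)"
proof -
  have h1: "\<bar>sin x\<bar> * \<bar>cos y\<bar> \<le> \<bar>sin x\<bar>"
    by (rule mult_left_le[OF abs_cos_le_one abs_ge_zero])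
  have h2: "\<bar>cos x\<bar> * \<bar>sin y\<bar> \<le> \<bar>sin y\<bar>"
    using mult_left_le[OF abs_cos_le_one[of x] abs_ge_zero[of "sin y"]] by (simp add: mult.commute)
  have "\<bar>sin (x - y)\<bar> = \<bar>sin x * cos y - cos x * sin y\<bar>" by (simp add: sin_diff)
  also have "\<dots> \<le> \<bar>sin x * cos y\<bar> + \<bar>cos x * sin y\<bar>"
    by (rule abs_triangle_ineq4)
  also have "\<dots> = \<bar>sin x\<bar> * \<bar>cos y\<bar> + \<bar>cos x\<bar> * \<bar>sin y\<bar>" by (simp add: abs_mult)
  finally have h: "\<bar>sin (x - y)\<bar> \<le> \<bar>sin x\<bar> + \<bar>sin y\<bar>" using h1 h2 by linarith
  have "sin (x - y)^2 = \<bar>sin (x - y)\<bar>^2" by simp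
  also have "\<dots> \<le> (\<bar>sin x\<bar> + \<bar>sin y\<bar>)^2"
    by (rule power_mono[OF h abs_ge_zero])
  finally have h3: "sin (x - y)^2 \<le> (\<bar>sin x\<bar> + \<bar>sin y\<bar>)^2" .
  have e: "2 * (sin x ^2 + sin y ^2) - (\<bar>sin x\<bar> + \<bar>sin y\<bar>)^2 = (\<bar>sin x\<bar> - \<bar>sin y\<bar>)^2"
    by (simp add: power2_eq_square algebra_simps)
  have "0 \<le> (\<bar>sin x\<bar> - \<bar>sin y\<bar>)^2" by simp
  with h3 e show ?thesis by linarith
qed

lemma sin_ge_half:
  fixes y :: real
  assumes "0 \<le> y" "y \<le> 1"
  shows "y / 2 \<le> sin y"
proof -
  have d: "DERIV (\<lambda>t. sin t - t/2) x :> cos x - 1/2" for x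
    by (auto intro!: derivative_eq_intros)
  have p: "0 \<le> cos x - 1/2" if x: "0 \<le> x" "x \<le> y" for x
  proof -
    have "cos (pi/3) \<le> cos x"
      using x assms pi_gt3 by (intro cos_monotone_0_pi_le) auto
    thus "0 \<le> cos x - 1/2" by (simp add: cos_60)
  qed
  have "(\<lambda>t. sin t - t/2) 0 \<le> (\<lambda>t. sin t - t/2) y"
    apply (rule DERIV_nonneg_imp_nondecreasing[OF assms(1)])
    using d p by blast
  thus ?thesis by simp
qed

lemma shift_bound:
  fixes m g :: nat
  assumes "g \<le> m"
  shows "(real m - real g) * sin (real g * e)^2 \<le> 4 * (\<Sum>i<m. sin (b + real i * e)^2)"
proof -
  have "(real m - real g) * sin (real g * e)^2 = (\<Sum>i<m-g. sin (real g * e)^2)"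
    using assms by simp
  also have "\<dots> \<le> (\<Sum>i<m-g. 2 * (sin (b + real (i+g) * e)^2 + sin (b + real i * e)^2))"
  proof (intro sum_mono)
    fix i
    have "real g * e = (b + real (i+g) * e) - (b + real i * e)" by (simp add: algebra_simps)
    thus "sin (real g * e)^2 \<le> 2 * (sin (b + real (i+g) * e)^2 + sin (b + real i * e)^2)"
      using sin_diff_sq by metis
  qed
  also have "\<dots> = 2 * (\<Sum>i<m-g. sin (b + real (i+g) * e)^2) + 2 * (\<Sum>i<m-g. sin (b + real i * e)^2)"
    by (simp add: sum.distrib sum_distrib_left)
  finally have c1: "(real m - real g) * sin (real g * e)^2 \<le> 2 * (\<Sum>i<m-g. sin (b + real (i+g) * e)^2) + 2 * (\<Sum>i<m-g. sin (b + real i * e)^2)" .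
  have c2: "(\<Sum>i<m-g. sin (b + real (i+g) * e)^2) \<le> (\<Sum>i<m. sin (b + real i * e)^2)"
  proof -
    have "(\<Sum>i<m-g. sin (b + real (i+g) * e)^2) = (\<Sum>i\<in>(\<lambda>i. i+g) ` {..<m-g}. sin (b + real i * e)^2)"
      by (subst sum.reindex) (auto simp: inj_on_def)
    also have "\<dots> \<le> (\<Sum>i<m. sin (b + real i * e)^2)"
      by (intro sum_mono2) auto
    finally show ?thesis .
  qed
  have c3: "(\<Sum>i<m-g. sin (b + real i * e)^2) \<le> (\<Sum>i<m. sin (b + real i * e)^2)"
    by (intro sum_mono2) auto
  from c1 c2 c3 show ?thesis by linarith
qed

lemma sin_sq_ge_half:
  fixes x :: real
  assumes "pi/4 \<le> x" "x \<le> 3*pi/4"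
  shows "1/2 \<le> sin x ^2"
proof -
  have "cos (2*x) \<le> 0"
  proof -
    have "cos (2*x) = - sin (2*x - pi/2)" by (simp add: sin_diff)
    moreover have "0 \<le> sin (2*x - pi/2)" using assms by (intro sin_ge_zero) auto
    ultimately show ?thesis by simp
  qed
  thus ?thesis by (simp add: cos_double_sin)
qed

lemma trig_main:
  fixes m :: nat and d e b :: real
  assumes m4: "4 \<le> m" and d0: "0 \<le> d" and d1: "d \<le> pi/2"
    and eq: "\<And>g::nat. sin (real g * e)^2 = sin (real g * d)^2"
  shows "min (real m^3 * d^2 / 288) (real m / 32) \<le> (\<Sum>i<m. sin (b + real i * e)^2)"
proof -
  define S where "S = (\<Sum>i<m. sin (b + real i * e)^2)"
  have sb: "(real m - real g) * sin (real g * d)^2 \<le> 4 * S" if "g \<le> m" for g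
    using shift_bound[OF that, of e b] eq[of g] unfolding S_def by simp
  define h where "h = m div 2"
  have h1: "real m \<le> 3 * real h" using m4 unfolding h_def by linarith
  have h2: "2 * real h \<le> real m" unfolding h_def by linarith
  have hm: "h \<le> m" unfolding h_def by simp
  show ?thesis
  proof (cases "real h * d \<le> 1")
    case True
    have hd0: "0 \<le> real h * d" using d0 by simp
    have s1: "real h * d / 2 \<le> sin (real h * d)" by (rule sin_ge_half[OF hd0 True])
    have s2: "(real h * d / 2)^2 \<le> sin (real h * d)^2"
      by (rule power_mono[OF s1]) (use hd0 in simp)
    have mh: "real m / 2 \<le> real m - real h" using h2 by linarith
    have "real m^3 * d^2 / 288 = (real m / 2) * ((real m / 3) * d / 2)^2 / 4"
      by (simp add: power2_eq_square power3_eq_cube algebra_simps)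
    also have "\<dots> \<le> (real m - real h) * (real h * d / 2)^2 / 4"
    proof -
      have a0: "real m / 3 * d \<le> real h * d" by (rule mult_right_mono) (use h1 d0 in linarith)+
      hence a: "(real m / 3) * d / 2 \<le> real h * d / 2" by linarith
      have b: "((real m / 3) * d / 2)^2 \<le> (real h * d / 2)^2"
        by (rule power_mono[OF a]) (use d0 in simp)
      have "(real m / 2) * ((real m / 3) * d / 2)^2 \<le> (real m - real h) * (real h * d / 2)^2"
        by (rule mult_mono[OF mh b]) (use mh in auto)
      thus ?thesis by simp
    qed
    also have "\<dots> \<le> (real m - real h) * sin (real h * d)^2 / 4"
      using s2 mh by (simp add: mult_left_mono divide_right_mono)
    also have "\<dots> \<le> S" using sb[OF hm] by simp
    finally show ?thesis unfolding S_def by linarith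
  next
    case False
    hence dpos: "0 < d" using d0 by (cases "d = 0") auto
    define g where "g = nat \<lceil>pi / (4 * d)\<rceil>"
    have q0: "0 < pi / (4*d)" using dpos by simp
    have g1: "pi / (4*d) \<le> real g" unfolding g_def using q0 by linarith
    have g2: "real g < pi / (4*d) + 1" unfolding g_def using q0 by linarith
    have gd1: "pi/4 \<le> real g * d" using g1 dpos by (simp add: field_simps)
    have "real g * d < (pi / (4*d) + 1) * d" using g2 dpos by (simp add: mult_strict_right_mono)
    also have "\<dots> = pi/4 + d" using dpos by (simp add: field_simps)
    finally have gd2: "real g * d \<le> 3 * pi / 4" using d1 by linarith
    have sq: "1/2 \<le> sin (real g * d)^2" by (rule sin_sq_ge_half[OF gd1 gd2])
    have "1 < real h * d" using False by simp
    hence "pi / (4*d) < pi * real h / 4" using dpos pi_gt3 by (simp add: field_simps)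
    hence "real g < pi * real h / 4 + 1" using g2 by linarith
    also have "\<dots> \<le> real m / 2 + 1"
    proof -
      have "pi * real h \<le> 4 * real h" by (rule mult_right_mono) (use pi_less_4 in auto)
      thus ?thesis using h2 by linarith
    qed
    finally have gm: "real g < real m / 2 + 1" .
    hence gm': "g \<le> m" using m4 by linarith
    have mg: "real m / 4 \<le> real m - real g" using gm m4 by linarith
    have "real m / 32 = (real m / 4) * (1/2) / 4" by simp
    also have "\<dots> \<le> (real m - real g) * sin (real g * d)^2 / 4"
      by (intro divide_right_mono mult_mono mg sq) (use mg in auto)
    also have "\<dots> \<le> S" using sb[OF gm'] by simp
    finally show ?thesis unfolding S_def by linarith
  qed
qed

lemma exp_neg_le: "0 < (x::real) \<Longrightarrow> exp (- x) \<le> 4 / x^2"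
proof -
  assume x: "0 < x"
  have "1 + x/2 \<le> exp (x/2)" by (rule exp_ge_add_one_self)
  hence e1: "x/2 \<le> exp (x/2)" by linarith
  have "(x/2)^2 \<le> exp (x/2)^2" by (rule power_mono[OF e1]) (use x in simp)
  also have "exp (x/2)^2 = exp x" by (simp add: power2_eq_square flip: exp_add)
  finally have "x^2 / 4 \<le> exp x" by (simp add: power_divide)
  hence "x^2 \<le> 4 * exp x" by simp
  thus ?thesis using x by (simp add: exp_minus field_simps)
qed

lemma gauss_sum:
  fixes a :: real
  assumes a: "0 < a"
  shows "(\<Sum>u<L. exp (- a * real u^2)) \<le> 2 * (1 + 1 / sqrt a)"
proof -
  define t where "t = nat \<lceil>1 / sqrt a\<rceil>"
  have sa: "0 < sqrt a" using a by simp
  have c1: "1 / sqrt a \<le> real_of_int \<lceil>1 / sqrt a\<rceil>" by (rule le_of_int_ceiling)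
  have c2: "real_of_int \<lceil>1 / sqrt a\<rceil> < 1 / sqrt a + 1" using ceiling_correct[of "1/sqrt a"] by linarith
  have c3: "0 < real_of_int \<lceil>1 / sqrt a\<rceil>" using c1 sa by (smt (verit) divide_pos_pos)
  hence c4: "0 < \<lceil>1 / sqrt a\<rceil>" by simp
  have rt: "real t = real_of_int \<lceil>1 / sqrt a\<rceil>" unfolding t_def using c4 by simp
  have t1: "1 / sqrt a \<le> real t" using c1 rt by simp
  have t2: "real t \<le> 1 / sqrt a + 1" using c2 rt by simp
  have "0 < real t" using c3 rt by simp
  hence tpos: "1 \<le> t" by simp
  have at: "1 \<le> a * real t ^ 2"
  proof -
    have "1 \<le> sqrt a * real t" using t1 sa by (simp add: field_simps)
    hence "1 \<le> (sqrt a * real t)^2" by (simp add: one_le_power)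
    thus ?thesis using a by (simp add: power_mult_distrib)
  qed
  let ?f = "\<lambda>u::nat. exp (- a * real u^2)"
  have "(\<Sum>u<L. ?f u) \<le> (\<Sum>u<L * t. ?f u)"
    by (intro sum_mono2) (use tpos in auto)
  also have "\<dots> = (\<Sum>q<L. \<Sum>u\<in>{q*t..<q*t+t}. ?f u)"
    by (rule sum.nat_group[symmetric])
  also have "\<dots> \<le> (\<Sum>q<L. real t * exp (-1) ^ q)"
  proof (intro sum_mono)
    fix q
    have "(\<Sum>u\<in>{q*t..<q*t+t}. ?f u) \<le> (\<Sum>u\<in>{q*t..<q*t+t}. exp (-1) ^ q)"
    proof (intro sum_mono)
      fix u assume "u \<in> {q*t..<q*t+t}"
      hence "real (q * t) \<le> real u" by (simp only: of_nat_le_iff) simp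
      hence u: "real q * real t \<le> real u" by simp
      have "real q \<le> real q ^ 2" by (cases q) (auto simp: power2_eq_square)
      also have "\<dots> = real q^2 * 1" by simp
      also have "\<dots> \<le> real q^2 * (a * real t^2)" by (rule mult_left_mono) (use at in auto)
      also have "\<dots> = a * (real q * real t)^2" by (simp add: power_mult_distrib)
      also have "\<dots> \<le> a * real u ^2" using u a by (intro mult_left_mono power_mono) auto
      finally have "- a * real u^2 \<le> real q * (-1)" by simp
      hence "?f u \<le> exp (real q * (-1))" by (simp only: exp_le_cancel_iff)
      also have "exp (real q * (-1)) = exp (-1) ^ q" by (rule exp_of_nat_mult)
      finally show "?f u \<le> exp (-1) ^ q" .
    qed
    thus "(\<Sum>u\<in>{q*t..<q*t+t}. ?f u) \<le> real t * exp (-1) ^ q" by simp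
  qed
  also have "\<dots> = real t * (\<Sum>q<L. exp (-1) ^ q)" by (simp add: sum_distrib_left)
  also have "(\<Sum>q<L. exp (-1::real) ^ q) \<le> 2"
  proof -
    have e: "exp (-1::real) \<le> 1/2"
    proof -
      have "2 \<le> exp (1::real)" using exp_ge_add_one_self[of 1] by simp
      thus ?thesis by (simp add: exp_minus field_simps)
    qed
    have e0: "0 < exp (-1::real)" by simp
    have "(\<Sum>q<L. exp (-1::real) ^ q) = (1 - exp (-1) ^ L) / (1 - exp (-1))"
      using e by (subst sum_gp_strict) auto
    also have "\<dots> \<le> 1 / (1 - exp (-1))"
      using e e0 by (intro divide_right_mono) auto
    also have "\<dots> \<le> 2" using e by (simp add: field_simps)
    finally show ?thesis .
  qed
  hence "real t * (\<Sum>q<L. exp (-1::real) ^ q) \<le> real t * 2" by (intro mult_left_mono) auto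
  finally have fin: "(\<Sum>u<L. ?f u) \<le> real t * 2" .
  have "real t * 2 \<le> (1 / sqrt a + 1) * 2" by (rule mult_right_mono[OF t2]) simp
  with fin show ?thesis by (simp add: algebra_simps)
qed



definition chf :: "int pmf \<Rightarrow> real \<Rightarrow> complex" where
  "chf p t = measure_pmf.expectation p (\<lambda>x. cis (t * real_of_int x))"

lemma cis_sum: "finite A \<Longrightarrow> cis (\<Sum>x\<in>A. f x) = (\<Prod>x\<in>A. cis (f x))"
  by (induct A rule: finite_induct) (auto simp flip: cis_mult)

lemma roots_sum:
  fixes z :: int and N :: nat
  assumes N: "0 < N" and z: "\<bar>z\<bar> < int N"
  shows "(\<Sum>l<N. cis (2 * pi * real l * real_of_int z / real N)) = (if z = 0 then of_nat N else 0)"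
proof (cases "z = 0")
  case True thus ?thesis by simp
next
  case False
  define w where "w = cis (2 * pi * real_of_int z / real N)"
  have pw: "cis (2 * pi * real l * real_of_int z / real N) = w ^ l" for l
  proof -
    have e: "2 * pi * real l * real_of_int z / real N = real l * (2 * pi * real_of_int z / real N)"
      by (simp add: divide_inverse mult_ac)
    have "w ^ l = cis (real l * (2 * pi * real_of_int z / real N))" unfolding w_def by (rule Complex.DeMoivre)
    thus ?thesis by (simp only: e)
  qed
  have w1: "w \<noteq> 1"
  proof
    assume "w = 1"
    hence "cos (2 * pi * real_of_int z / real N) = 1" unfolding w_def
      by (metis cis.sel(1) one_complex.sel(1))
    then obtain n :: int where n: "2 * pi * real_of_int z / real N = real_of_int n * 2 * pi"
      using cos_one_2pi_int by blast
    hence "real_of_int z = real_of_int n * real N" using N by (simp add: field_simps)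
    hence zn: "z = n * int N" by (metis of_int_eq_iff of_int_mult of_int_of_nat_eq)
    have "n \<noteq> 0" using False zn by auto
    hence n1: "1 \<le> \<bar>n\<bar>" by linarith
    have "int N * 1 \<le> int N * \<bar>n\<bar>" by (rule mult_left_mono[OF n1]) simp
    moreover have "\<bar>z\<bar> = int N * \<bar>n\<bar>" using zn by (simp add: abs_mult)
    ultimately have "int N \<le> \<bar>z\<bar>" by simp
    thus False using z by simp
  qed
  have wN: "w ^ N = 1"
  proof -
    have "w ^ N = cis (real N * (2 * pi * real_of_int z / real N))" unfolding w_def by (rule Complex.DeMoivre)
    also have "\<dots> = cis (2 * pi * real_of_int z)" using N by simp
    also have "\<dots> = 1" by (rule cis_multiple_2pi) simp
    finally show ?thesis .
  qed
  have "(\<Sum>l<N. cis (2 * pi * real l * real_of_int z / real N)) = (\<Sum>l<N. w ^ l)"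
    by (simp add: pw)
  also have "\<dots> = 0" using w1 wN by (simp add: sum_gp_strict)
  finally show ?thesis using False by simp
qed

lemma integral_pair_pmf_finite:
  fixes f :: "'a \<times> 'b \<Rightarrow> complex"
  assumes A: "finite (set_pmf A)" and B: "finite (set_pmf B)"
  shows "measure_pmf.expectation (pair_pmf A B) f =
         measure_pmf.expectation A (\<lambda>a. measure_pmf.expectation B (\<lambda>b. f (a, b)))"
proof -
  have "measure_pmf.expectation (pair_pmf A B) f = (\<Sum>z\<in>set_pmf A \<times> set_pmf B. pmf (pair_pmf A B) z *\<^sub>R f z)"
    by (rule integral_measure_pmf) (use A B in auto)
  also have "\<dots> = (\<Sum>(a,b)\<in>set_pmf A \<times> set_pmf B. pmf A a *\<^sub>R (pmf B b *\<^sub>R f (a, b)))"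
    by (intro sum.cong refl) (auto simp: pmf_pair)
  also have "\<dots> = (\<Sum>a\<in>set_pmf A. \<Sum>b\<in>set_pmf B. pmf A a *\<^sub>R (pmf B b *\<^sub>R f (a, b)))"
    by (simp add: sum.cartesian_product)
  also have "\<dots> = (\<Sum>a\<in>set_pmf A. pmf A a *\<^sub>R measure_pmf.expectation B (\<lambda>b. f (a, b)))"
  proof (intro sum.cong refl)
    fix a
    have "measure_pmf.expectation B (\<lambda>b. f (a, b)) = (\<Sum>b\<in>set_pmf B. pmf B b *\<^sub>R f (a, b))"
      by (rule integral_measure_pmf) (use B in auto)
    thus "(\<Sum>b\<in>set_pmf B. pmf A a *\<^sub>R (pmf B b *\<^sub>R f (a, b))) = pmf A a *\<^sub>R measure_pmf.expectation B (\<lambda>b. f (a, b))"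
      by (simp add: scaleR_sum_right)
  qed
  also have "\<dots> = measure_pmf.expectation A (\<lambda>a. measure_pmf.expectation B (\<lambda>b. f (a, b)))"
    by (rule integral_measure_pmf[symmetric]) (use A in auto)
  finally show ?thesis .
qed

lemma finite_set_Pi_pmf:
  assumes "finite J" "\<And>j. j \<in> J \<Longrightarrow> finite (set_pmf (P j))"
  shows "finite (set_pmf (Pi_pmf J d P))"
  using assms by (simp add: set_Pi_pmf finite_PiE_dflt)

lemma expectation_prod_Pi_pmf_complex:
  fixes f :: "'a \<Rightarrow> 'b \<Rightarrow> complex"
  assumes "finite J" "\<And>j. finite (set_pmf (P j))"
  shows "measure_pmf.expectation (Pi_pmf J d P) (\<lambda>xi. \<Prod>j\<in>J. f j (xi j)) =
         (\<Prod>j\<in>J. measure_pmf.expectation (P j) (f j))"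
  using assms(1)
proof (induction rule: finite_induct)
  case empty
  show ?case by simp
next
  case (insert x J)
  have fin: "finite (set_pmf (Pi_pmf J d P))" by (rule finite_set_Pi_pmf) (use insert assms in auto)
  have "measure_pmf.expectation (Pi_pmf (insert x J) d P) (\<lambda>xi. \<Prod>j\<in>insert x J. f j (xi j)) =
        measure_pmf.expectation (pair_pmf (P x) (Pi_pmf J d P))
          (\<lambda>z. \<Prod>j\<in>insert x J. f j (((snd z)(x := fst z)) j))"
    using insert by (simp add: Pi_pmf_insert case_prod_unfold)
  also have "\<dots> = measure_pmf.expectation (P x) (\<lambda>y. measure_pmf.expectation (Pi_pmf J d P)
          (\<lambda>g. \<Prod>j\<in>insert x J. f j ((g(x := y)) j)))"
    using integral_pair_pmf_finite[of "P x" "Pi_pmf J d P" "\<lambda>z. \<Prod>j\<in>insert x J. f j (((snd z)(x := fst z)) j)"] fin assms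
    by simp
  also have "\<dots> = measure_pmf.expectation (P x) (\<lambda>y. measure_pmf.expectation (Pi_pmf J d P)
          (\<lambda>g. f x y * (\<Prod>j\<in>J. f j (g j))))"
  proof (intro Bochner_Integration.integral_cong refl)
    fix y g
    have "(\<Prod>j\<in>insert x J. f j ((g(x := y)) j)) = f x y * (\<Prod>j\<in>J. f j ((g(x := y)) j))"
      using insert by simp
    also have "(\<Prod>j\<in>J. f j ((g(x := y)) j)) = (\<Prod>j\<in>J. f j (g j))"
      by (intro prod.cong refl) (use insert in auto)
    finally show "(\<Prod>j\<in>insert x J. f j ((g(x := y)) j)) = f x y * (\<Prod>j\<in>J. f j (g j))" .
  qed
  also have "\<dots> = measure_pmf.expectation (P x) (\<lambda>y. f x y * (\<Prod>j\<in>J. measure_pmf.expectation (P j) (f j)))"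
    by (simp add: insert.IH)
  also have "\<dots> = measure_pmf.expectation (P x) (f x) * (\<Prod>j\<in>J. measure_pmf.expectation (P j) (f j))"
    by simp
  also have "\<dots> = (\<Prod>j\<in>insert x J. measure_pmf.expectation (P j) (f j))"
    using insert by simp
  finally show ?case .
qed



lemma chf_formula:
  assumes supp: "set_pmf p \<subseteq> {-1, 0, 1}"
  shows "chf p t = complex_of_real (pmf p 0) + complex_of_real (pmf p 1) * cis t
                   + complex_of_real (pmf p (-1)) * cis (-t)"
proof -
  have "chf p t = (\<Sum>a\<in>{-1, 0, 1::int}. pmf p a *\<^sub>R cis (t * real_of_int a))"
    unfolding chf_def by (rule integral_measure_pmf) (use supp in auto)
  thus ?thesis by (simp add: scaleR_conv_of_real)
qed

lemma chf_norm_bound: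
  assumes supp: "set_pmf p \<subseteq> {-1, 0, 1}"
  shows "cmod (chf p t) \<le> exp (- ((pmf p 0 * (pmf p 1 + pmf p (-1)) + 4 * pmf p 1 * pmf p (-1)) / 2) * sin t ^ 2)"
proof -
  define p0 where "p0 = pmf p 0"
  define p1 where "p1 = pmf p 1"
  define pm where "pm = pmf p (-1)"
  have sum1: "p0 + p1 + pm = 1"
  proof -
    have "(\<Sum>x\<in>{-1, 0, 1::int}. pmf p x) = 1" by (rule sum_pmf_eq_1) (use supp in auto)
    thus ?thesis unfolding p0_def p1_def pm_def by simp
  qed
  have nn: "0 \<le> p0" "0 \<le> p1" "0 \<le> pm" unfolding p0_def p1_def pm_def by simp_all
  have re: "Re (chf p t) = p0 + (p1 + pm) * cos t"
    using chf_formula[OF supp, of t] unfolding p0_def p1_def pm_def by (simp add: algebra_simps)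
  have im: "Im (chf p t) = (p1 - pm) * sin t"
    using chf_formula[OF supp, of t] unfolding p0_def p1_def pm_def by (simp add: algebra_simps)
  have cs: "cos t ^ 2 = 1 - sin t ^ 2" by (simp add: cos_squared_eq)
  have "cmod (chf p t) ^ 2 = (p0 + (p1 + pm) * cos t)^2 + ((p1 - pm) * sin t)^2"
    by (simp add: cmod_power2 re im)
  also have "\<dots> = 1 - 2 * p0 * (p1 + pm) * (1 - cos t) - 4 * p1 * pm * sin t ^ 2"
  proof -
    have p0e: "p0 = 1 - p1 - pm" using sum1 by linarith
    show ?thesis unfolding p0e using cs by algebra
  qed
  also have "\<dots> \<le> 1 - (p0 * (p1 + pm) + 4 * p1 * pm) * sin t ^ 2"
  proof -
    have "sin t ^ 2 \<le> 2 * (1 - cos t)"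
    proof -
      have "sin t ^ 2 = (1 - cos t) * (1 + cos t)" using cs by (simp add: algebra_simps power2_eq_square)
      also have "\<dots> \<le> (1 - cos t) * 2" by (rule mult_left_mono) (use cos_le_one[of t] in auto)
      finally show ?thesis by simp
    qed
    hence "p0 * (p1 + pm) * sin t ^ 2 \<le> p0 * (p1 + pm) * (2 * (1 - cos t))"
      by (rule mult_left_mono) (use nn in simp)
    thus ?thesis by (simp add: algebra_simps)
  qed
  also have "\<dots> \<le> exp (- (p0 * (p1 + pm) + 4 * p1 * pm) * sin t ^ 2)"
  proof -
    have ex: "1 + (- (p0 * (p1 + pm) + 4 * p1 * pm) * sin t ^ 2) \<le> exp (- (p0 * (p1 + pm) + 4 * p1 * pm) * sin t ^ 2)"
      by (rule exp_ge_add_one_self)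
    thus ?thesis by linarith
  qed
  also have "\<dots> = exp (- ((p0 * (p1 + pm) + 4 * p1 * pm) / 2) * sin t ^ 2) ^ 2"
  proof -
    have "- (p0 * (p1 + pm) + 4 * p1 * pm) * sin t ^ 2 = 2 * (- ((p0 * (p1 + pm) + 4 * p1 * pm) / 2) * sin t ^ 2)"
      by (simp add: algebra_simps)
    thus ?thesis by (simp only: exp_double)
  qed
  finally have "cmod (chf p t) ^ 2 \<le> exp (- ((p0 * (p1 + pm) + 4 * p1 * pm) / 2) * sin t ^ 2) ^ 2" .
  hence "cmod (chf p t) \<le> exp (- ((p0 * (p1 + pm) + 4 * p1 * pm) / 2) * sin t ^ 2)"
    by (rule power2_le_imp_le) simp
  thus ?thesis unfolding p0_def p1_def pm_def .
qed

lemma fourier_bound: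
  fixes p :: "int pmf" and J :: "nat set" and a :: "nat \<Rightarrow> int" and s :: int and N :: nat
  assumes J: "finite J" and pf: "finite (set_pmf p)" and N: "0 < N"
    and bnd: "\<And>xi. xi \<in> set_pmf (Pi_pmf J 0 (\<lambda>_. p)) \<Longrightarrow> \<bar>(\<Sum>j\<in>J. a j * xi j) - s\<bar> < int N"
  shows "measure_pmf.prob (Pi_pmf J 0 (\<lambda>_. p)) {xi. (\<Sum>j\<in>J. a j * xi j) = s}
         \<le> (\<Sum>l<N. \<Prod>j\<in>J. cmod (chf p (2 * pi * real l / real N * real_of_int (a j)))) / real N"
proof -
  define Q where "Q = Pi_pmf J 0 (\<lambda>_. p)"
  define X where "X = (\<lambda>xi::nat\<Rightarrow>int. \<Sum>j\<in>J. a j * xi j)"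
  define th where "th = (\<lambda>l::nat. 2 * pi * real l / real N)"
  have Qf: "finite (set_pmf Q)" unfolding Q_def by (rule finite_set_Pi_pmf) (use J pf in auto)
  have "complex_of_real (measure_pmf.prob Q {xi. X xi = s}) =
        complex_of_real (measure_pmf.expectation Q (indicator {xi. X xi = s}))"
    by simp
  also have "\<dots> = measure_pmf.expectation Q (\<lambda>xi. complex_of_real (indicator {xi. X xi = s} xi))"
    by simp
  also have "\<dots> = measure_pmf.expectation Q (\<lambda>xi. (\<Sum>l<N. cis (th l * real_of_int (X xi) - th l * real_of_int s)) / of_nat N)"
  proof (rule integral_cong_AE)
    show "AE xi in measure_pmf Q. complex_of_real (indicator {xi. X xi = s} xi) =
          (\<Sum>l<N. cis (th l * real_of_int (X xi) - th l * real_of_int s)) / of_nat N"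
    proof (rule AE_pmfI)
      fix xi assume xi: "xi \<in> set_pmf Q"
      have b: "\<bar>X xi - s\<bar> < int N" using bnd[of xi] xi unfolding Q_def X_def by simp
      have "(\<Sum>l<N. cis (th l * real_of_int (X xi) - th l * real_of_int s)) =
            (\<Sum>l<N. cis (2 * pi * real l * real_of_int (X xi - s) / real N))"
        by (intro sum.cong refl) (simp add: th_def algebra_simps diff_divide_distrib)
      also have "\<dots> = (if X xi - s = 0 then of_nat N else 0)" by (rule roots_sum[OF N b])
      finally show "complex_of_real (indicator {xi. X xi = s} xi) =
          (\<Sum>l<N. cis (th l * real_of_int (X xi) - th l * real_of_int s)) / of_nat N"
        using N by (auto simp: indicator_def)
    qed
  qed simp_all
  also have "\<dots> = (\<Sum>l<N. measure_pmf.expectation Q (\<lambda>xi. cis (th l * real_of_int (X xi) - th l * real_of_int s))) / of_nat N"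
  proof -
    have "measure_pmf.expectation Q (\<lambda>xi. (\<Sum>l<N. cis (th l * real_of_int (X xi) - th l * real_of_int s)) / of_nat N)
        = measure_pmf.expectation Q (\<lambda>xi. (\<Sum>l<N. cis (th l * real_of_int (X xi) - th l * real_of_int s))) / of_nat N"
      by (rule integral_divide_zero)
    also have "measure_pmf.expectation Q (\<lambda>xi. (\<Sum>l<N. cis (th l * real_of_int (X xi) - th l * real_of_int s)))
        = (\<Sum>l<N. measure_pmf.expectation Q (\<lambda>xi. cis (th l * real_of_int (X xi) - th l * real_of_int s)))"
      by (rule Bochner_Integration.integral_sum) (use Qf in \<open>auto intro: integrable_measure_pmf_finite\<close>)
    finally show ?thesis .
  qed
  also have "\<dots> = (\<Sum>l<N. cis (- th l * real_of_int s) * (\<Prod>j\<in>J. chf p (th l * real_of_int (a j)))) / of_nat N"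
  proof -
    have "measure_pmf.expectation Q (\<lambda>xi. cis (th l * real_of_int (X xi) - th l * real_of_int s))
          = cis (- th l * real_of_int s) * (\<Prod>j\<in>J. chf p (th l * real_of_int (a j)))" for l
    proof -
      have "measure_pmf.expectation Q (\<lambda>xi. cis (th l * real_of_int (X xi) - th l * real_of_int s))
          = measure_pmf.expectation Q (\<lambda>xi. cis (- th l * real_of_int s) * (\<Prod>j\<in>J. cis (th l * real_of_int (a j) * real_of_int (xi j))))"
      proof (intro Bochner_Integration.integral_cong refl)
        fix xi
        have "th l * real_of_int (X xi) = (\<Sum>j\<in>J. th l * real_of_int (a j) * real_of_int (xi j))"
          unfolding X_def by (simp add: sum_distrib_left mult.assoc)
        hence h: "cis (th l * real_of_int (X xi)) = (\<Prod>j\<in>J. cis (th l * real_of_int (a j) * real_of_int (xi j)))"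
          using cis_sum[OF J] by simp
        thus "cis (th l * real_of_int (X xi) - th l * real_of_int s) =
              cis (- th l * real_of_int s) * (\<Prod>j\<in>J. cis (th l * real_of_int (a j) * real_of_int (xi j)))"
        proof -
          have "cis (th l * real_of_int (X xi) - th l * real_of_int s) = cis (- th l * real_of_int s) * cis (th l * real_of_int (X xi))"
            by (simp add: cis_mult)
          thus ?thesis using h by simp
        qed
      qed
      also have "\<dots> = cis (- th l * real_of_int s) * measure_pmf.expectation Q (\<lambda>xi. (\<Prod>j\<in>J. cis (th l * real_of_int (a j) * real_of_int (xi j))))"
        by simp
      also have "measure_pmf.expectation Q (\<lambda>xi. (\<Prod>j\<in>J. cis (th l * real_of_int (a j) * real_of_int (xi j))))
           = (\<Prod>j\<in>J. measure_pmf.expectation p (\<lambda>x. cis (th l * real_of_int (a j) * real_of_int x)))"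
        unfolding Q_def by (rule expectation_prod_Pi_pmf_complex[OF J]) (use pf in simp)
      also have "\<dots> = (\<Prod>j\<in>J. chf p (th l * real_of_int (a j)))" unfolding chf_def by simp
      finally show ?thesis .
    qed
    thus ?thesis by simp
  qed
  finally have eq: "complex_of_real (measure_pmf.prob Q {xi. X xi = s}) =
     (\<Sum>l<N. cis (- th l * real_of_int s) * (\<Prod>j\<in>J. chf p (th l * real_of_int (a j)))) / of_nat N" .
  have "measure_pmf.prob Q {xi. X xi = s} = cmod (complex_of_real (measure_pmf.prob Q {xi. X xi = s}))"
    by simp
  also have "\<dots> = cmod (\<Sum>l<N. cis (- th l * real_of_int s) * (\<Prod>j\<in>J. chf p (th l * real_of_int (a j)))) / real N"
    by (simp only: eq norm_divide) simp
  also have "\<dots> \<le> (\<Sum>l<N. cmod (cis (- th l * real_of_int s) * (\<Prod>j\<in>J. chf p (th l * real_of_int (a j))))) / real N"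
    by (intro divide_right_mono norm_sum) simp
  also have "\<dots> = (\<Sum>l<N. \<Prod>j\<in>J. cmod (chf p (th l * real_of_int (a j)))) / real N"
    by (simp add: norm_mult prod_norm)
  finally show ?thesis unfolding Q_def X_def th_def .
qed



lemma sin_sq_npi1: "sin (y + real n * pi)^2 = sin y^2"
  by (simp add: sin_add power_mult_distrib power2_eq_square flip: power_mult_distrib)

lemma sin_sq_npi2: "sin (real n * pi - y)^2 = sin y^2"
  by (simp add: sin_diff power_mult_distrib power2_eq_square flip: power_mult_distrib)

lemma prod_subset_le1:
  fixes f :: "'a \<Rightarrow> real"
  assumes "finite B" "A \<subseteq> B" "\<And>x. x \<in> B \<Longrightarrow> 0 \<le> f x" "\<And>x. x \<in> B \<Longrightarrow> f x \<le> 1"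
  shows "(\<Prod>x\<in>B. f x) \<le> (\<Prod>x\<in>A. f x)"
proof -
  have "(\<Prod>x\<in>B. f x) = (\<Prod>x\<in>B - A. f x) * (\<Prod>x\<in>A. f x)"
    by (rule prod.subset_diff) (use assms in auto)
  also have "\<dots> \<le> 1 * (\<Prod>x\<in>A. f x)"
    by (intro mult_right_mono prod_le_1 prod_nonneg) (use assms in auto)
  finally show ?thesis by simp
qed

lemma sum_mod_blocks:
  fixes f :: "nat \<Rightarrow> real"
  shows "(\<Sum>l<q * M. f (l mod M)) = real q * (\<Sum>r<M. f r)"
proof -
  have "(\<Sum>l<q * M. f (l mod M)) = (\<Sum>q'<q. \<Sum>l\<in>{q' * M..<q' * M + M}. f (l mod M))"
    by (rule sum.nat_group[symmetric])
  also have "\<dots> = (\<Sum>q'<q. \<Sum>r<M. f r)"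
  proof (rule sum.cong[OF refl])
    fix q'
    have "(\<Sum>l\<in>{q' * M..<q' * M + M}. f (l mod M)) = (\<Sum>l\<in>{0 + q' * M..<M + q' * M}. f (l mod M))"
      by (simp add: add.commute)
    also have "\<dots> = (\<Sum>r\<in>{0..<M}. f ((r + q' * M) mod M))"
      by (rule sum.shift_bounds_nat_ivl)
    also have "\<dots> = (\<Sum>r<M. f r)"
      by (intro sum.cong) auto
    finally show "(\<Sum>l\<in>{q' * M..<q' * M + M}. f (l mod M)) = (\<Sum>r<M. f r)" .
  qed
  also have "\<dots> = real q * (\<Sum>r<M. f r)" by simp
  finally show ?thesis .
qed

definition Kc :: "real \<Rightarrow> real" where
  "Kc g = 8 + 4 / (pi * sqrt (g / 288)) + 4096 / g^2"

lemma Kc_ge: "0 < g \<Longrightarrow> 8 \<le> Kc g"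
  unfolding Kc_def by (simp add: add_nonneg_nonneg)

lemma min_exp_split:
  fixes a :: real and r M :: nat
  assumes "0 \<le> a"
  shows "exp (- a * real (min r (M - r))^2) \<le> exp (- a * real r^2) + exp (- a * real (M - r)^2)"
proof (cases "r \<le> M - r")
  case True thus ?thesis by (simp add: min_def add_increasing2)
next
  case False thus ?thesis by (simp add: min_def add_increasing)
qed

lemma anti_conc_large:
  fixes p :: "int pmf" and gam :: real and J :: "nat set" and k m c :: nat and s :: int
  assumes supp: "set_pmf p \<subseteq> {-1, 0, 1}"
    and gam: "0 < gam"
    and chfb: "\<And>t. cmod (chf p t) \<le> exp (- gam * sin t ^ 2)"
    and J: "finite J" and k: "1 \<le> k" and m: "4 \<le> m"
    and AP: "\<And>i. i < m \<Longrightarrow> c + i * k \<in> J"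
  shows "measure_pmf.prob (Pi_pmf J 0 (\<lambda>_. p)) {xi. (\<Sum>j\<in>J. int j * xi j) = s}
         \<le> Kc gam / (real m * sqrt (real m))"
proof -
  define M :: nat where "M = m^2 + (\<Sum>j\<in>J. j) + nat \<bar>s\<bar> + 1"
  define N :: nat where "N = 2 * k * M"
  have M0: "0 < M" unfolding M_def by simp
  have N0: "0 < N" unfolding N_def using k M0 by simp
  have pf: "finite (set_pmf p)" using supp finite_subset by blast
  define th where "th = (\<lambda>l::nat. 2 * pi * real l / real N)"
  have bnd: "\<bar>(\<Sum>j\<in>J. int j * xi j) - s\<bar> < int N" if xi: "xi \<in> set_pmf (Pi_pmf J 0 (\<lambda>_. p))" for xi
  proof -
    have xij: "\<bar>xi j\<bar> \<le> 1" if "j \<in> J" for j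
    proof -
      have "xi \<in> PiE_dflt J 0 (set_pmf \<circ> (\<lambda>_. p))" using xi J by (simp add: set_Pi_pmf)
      hence "xi j \<in> set_pmf p" using that by (simp add: PiE_dflt_def)
      thus ?thesis using supp by auto
    qed
    have "\<bar>\<Sum>j\<in>J. int j * xi j\<bar> \<le> (\<Sum>j\<in>J. \<bar>int j * xi j\<bar>)" by (rule sum_abs)
    also have "\<dots> \<le> (\<Sum>j\<in>J. int j)"
    proof (intro sum_mono)
      fix j assume "j \<in> J"
      hence "\<bar>xi j\<bar> \<le> 1" by (rule xij)
      hence "int j * \<bar>xi j\<bar> \<le> int j * 1" by (intro mult_left_mono) auto
      thus "\<bar>int j * xi j\<bar> \<le> int j" by (simp add: abs_mult)
    qed
    finally have "\<bar>\<Sum>j\<in>J. int j * xi j\<bar> \<le> int (\<Sum>j\<in>J. j)" by simp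
    moreover have "\<bar>(\<Sum>j\<in>J. int j * xi j) - s\<bar> \<le> \<bar>\<Sum>j\<in>J. int j * xi j\<bar> + \<bar>s\<bar>" by (rule abs_triangle_ineq4)
    moreover have "int M = int (m^2) + int (\<Sum>j\<in>J. j) + \<bar>s\<bar> + 1" unfolding M_def by simp
    moreover have "0 \<le> int (m^2)" by simp
    ultimately have "\<bar>(\<Sum>j\<in>J. int j * xi j) - s\<bar> < int M" by linarith
    also have "int M \<le> int N"
    proof -
      have "1 * M \<le> (2 * k) * M" by (rule mult_right_mono) (use k in auto)
      hence "M \<le> N" unfolding N_def by (simp only: mult_1)
      thus ?thesis by (simp only: of_nat_le_iff)
    qed
    finally show ?thesis .
  qed
  have F: "measure_pmf.prob (Pi_pmf J 0 (\<lambda>_. p)) {xi. (\<Sum>j\<in>J. int j * xi j) = s}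
         \<le> (\<Sum>l<N. \<Prod>j\<in>J. cmod (chf p (2 * pi * real l / real N * real_of_int (int j)))) / real N"
    by (rule fourier_bound[OF J pf N0 bnd])
  define E2 where "E2 = exp (- gam * (real m / 32))"
  define A where "A = (\<lambda>r::nat. exp (- gam * (real m^3 * (pi * real (min r (M - r)) / real M)^2 / 288)))"
  have pt: "(\<Prod>j\<in>J. cmod (chf p (th l * real j))) \<le> A (l mod M) + E2" for l
  proof -
    have "(\<Prod>j\<in>J. cmod (chf p (th l * real j))) \<le> (\<Prod>j\<in>(\<lambda>i. c + i * k) ` {..<m}. cmod (chf p (th l * real j)))"
    proof (rule prod_subset_le1[OF J])
      show "(\<lambda>i. c + i * k) ` {..<m} \<subseteq> J" using AP by auto
      fix x
      have "cmod (chf p (th l * real x)) \<le> exp (- gam * sin (th l * real x) ^ 2)" by (rule chfb)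
      also have "\<dots> \<le> 1" using gam by simp
      finally show "cmod (chf p (th l * real x)) \<le> 1" .
    qed simp
    also have "\<dots> = (\<Prod>i<m. cmod (chf p (th l * real (c + i * k))))"
      by (subst prod.reindex) (use k in \<open>auto simp: inj_on_def\<close>)
    also have "\<dots> \<le> (\<Prod>i<m. exp (- gam * sin (th l * real (c + i * k)) ^ 2))"
      by (intro prod_mono conjI chfb) simp
    also have "\<dots> = exp (- gam * (\<Sum>i<m. sin (th l * real c + real i * (th l * real k)) ^ 2))"
      by (simp add: exp_sum sum_distrib_left algebra_simps)
    also have "\<dots> \<le> A (l mod M) + E2"
    proof -
      define r where "r = l mod M"
      define d where "d = pi * real (min r (M - r)) / real M"
      have rM: "r < M" unfolding r_def using M0 by simp
      have d0: "0 \<le> d" unfolding d_def by simp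
      have d1: "d \<le> pi / 2"
      proof -
        have "2 * real (min r (M - r)) \<le> real M" by linarith
        hence "pi * (2 * real (min r (M - r))) \<le> pi * real M" by (intro mult_left_mono) auto
        thus ?thesis unfolding d_def using M0 by (simp add: field_simps)
      qed
      have eq: "sin (real g * (th l * real k))^2 = sin (real g * d)^2" for g :: nat
      proof -
        define q where "q = l div M"
        have lq: "l = q * M + r" unfolding q_def r_def by simp
        have "real g * (th l * real k) = real g * pi * real l / real M"
          unfolding th_def N_def using k by (simp add: field_simps)
        also have "\<dots> = real g * pi * real r / real M + real (g * q) * pi"
          unfolding lq using M0 by (simp add: field_simps)
        finally have e0: "real g * (th l * real k) = real g * pi * real r / real M + real (g * q) * pi" .
        have e1: "sin (real g * (th l * real k))^2 = sin (real g * pi * real r / real M)^2"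
          by (simp only: e0 sin_sq_npi1)
        show ?thesis
        proof (cases "r \<le> M - r")
          case True
          hence "real g * d = real g * pi * real r / real M" unfolding d_def by (simp add: min_def)
          thus ?thesis using e1 by simp
        next
          case False
          hence "real g * d = real g * pi - real g * pi * real r / real M"
            unfolding d_def using rM M0 by (simp add: min_def of_nat_diff field_simps)
          hence "sin (real g * d)^2 = sin (real g * pi - real g * pi * real r / real M)^2" by simp
          also have "\<dots> = sin (real g * pi * real r / real M)^2" by (rule sin_sq_npi2)
          finally show ?thesis using e1 by simp
        qed
      qed
      have tm: "min (real m^3 * d^2 / 288) (real m / 32) \<le> (\<Sum>i<m. sin (th l * real c + real i * (th l * real k))^2)"
        by (rule trig_main[OF m d0 d1 eq])
      have "exp (- gam * (\<Sum>i<m. sin (th l * real c + real i * (th l * real k)) ^ 2))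
          \<le> exp (- gam * min (real m^3 * d^2 / 288) (real m / 32))"
        using tm gam by simp
      also have "\<dots> \<le> exp (- gam * (real m^3 * d^2 / 288)) + exp (- gam * (real m / 32))"
        by (simp add: min_def add_increasing add_increasing2)
      finally show ?thesis unfolding A_def E2_def d_def r_def .
    qed
    finally show ?thesis .
  qed
  have S1: "(\<Sum>l<N. \<Prod>j\<in>J. cmod (chf p (2 * pi * real l / real N * real_of_int (int j)))) / real N
       \<le> (\<Sum>r<M. A r) / real M + E2"
  proof -
    have "(\<Sum>l<N. \<Prod>j\<in>J. cmod (chf p (2 * pi * real l / real N * real_of_int (int j))))
        \<le> (\<Sum>l<N. A (l mod M) + E2)"
      by (intro sum_mono) (use pt in \<open>simp add: th_def\<close>)
    also have "\<dots> = (\<Sum>l<(2*k) * M. A (l mod M)) + real N * E2"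
      by (simp add: sum.distrib N_def)
    also have "\<dots> = real (2 * k) * (\<Sum>r<M. A r) + real N * E2"
      by (simp only: sum_mod_blocks)
    finally have "(\<Sum>l<N. \<Prod>j\<in>J. cmod (chf p (2 * pi * real l / real N * real_of_int (int j))))
        \<le> real (2 * k) * (\<Sum>r<M. A r) + real N * E2" .
    hence "(\<Sum>l<N. \<Prod>j\<in>J. cmod (chf p (2 * pi * real l / real N * real_of_int (int j)))) / real N
        \<le> (real (2 * k) * (\<Sum>r<M. A r) + real N * E2) / real N"
      by (intro divide_right_mono) auto
    also have "\<dots> = (\<Sum>r<M. A r) / real M + E2"
      unfolding N_def using k M0 by (simp add: field_simps)
    finally show ?thesis .
  qed
  define w where "w = real m * sqrt (real m)"
  have w0: "0 < w" unfolding w_def using m by simp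
  have w2: "w^2 = real m^3" unfolding w_def using m by (simp add: power_mult_distrib power3_eq_cube power2_eq_square)
  define a where "a = (pi * w / real M)^2 * (gam / 288)"
  have a0: "0 < a" unfolding a_def using gam w0 M0 by simp
  have sa: "sqrt a = pi * w / real M * sqrt (gam / 288)"
  proof -
    have "sqrt a = sqrt ((pi * w / real M)^2) * sqrt (gam / 288)" unfolding a_def by (rule real_sqrt_mult)
    also have "sqrt ((pi * w / real M)^2) = pi * w / real M" using w0 M0 by simp
    finally show ?thesis .
  qed
  have Ar: "A r \<le> exp (- a * real r^2) + exp (- a * real (M - r)^2)" for r
  proof -
    have "A r = exp (- a * real (min r (M - r))^2)"
      unfolding A_def a_def using M0 w2 by (simp add: power_mult_distrib power_divide field_simps)
    also have "\<dots> \<le> exp (- a * real r^2) + exp (- a * real (M - r)^2)"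
      by (rule min_exp_split) (use a0 in simp)
    finally show ?thesis .
  qed
  have G1: "(\<Sum>r<M. exp (- a * real r^2)) \<le> 2 * (1 + 1 / sqrt a)" by (rule gauss_sum[OF a0])
  have G2: "(\<Sum>r<M. exp (- a * real (M - r)^2)) \<le> 2 * (1 + 1 / sqrt a)"
  proof -
    have "(\<Sum>r<M. exp (- a * real (M - r)^2)) = (\<Sum>u\<in>(\<lambda>r. M - r) ` {..<M}. exp (- a * real u^2))"
      by (subst sum.reindex) (auto simp: inj_on_def)
    also have "\<dots> \<le> (\<Sum>u<M+1. exp (- a * real u^2))"
      by (intro sum_mono2) auto
    also have "\<dots> \<le> 2 * (1 + 1 / sqrt a)" by (rule gauss_sum[OF a0])
    finally show ?thesis .
  qed
  have SA: "(\<Sum>r<M. A r) \<le> 4 * (1 + 1 / sqrt a)"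
  proof -
    have "(\<Sum>r<M. A r) \<le> (\<Sum>r<M. exp (- a * real r^2) + exp (- a * real (M - r)^2))"
      by (intro sum_mono Ar)
    also have "\<dots> = (\<Sum>r<M. exp (- a * real r^2)) + (\<Sum>r<M. exp (- a * real (M - r)^2))"
      by (rule sum.distrib)
    finally show ?thesis using G1 G2 by linarith
  qed
  have T1: "(\<Sum>r<M. A r) / real M \<le> 4 / real M + 4 / (pi * sqrt (gam / 288)) / w"
  proof -
    have "(\<Sum>r<M. A r) / real M \<le> 4 * (1 + 1 / sqrt a) / real M"
      by (intro divide_right_mono SA) simp
    also have "\<dots> = 4 / real M + 4 / (pi * sqrt (gam / 288)) / w"
      unfolding sa using M0 w0 gam by (simp add: field_simps)
    finally show ?thesis .
  qed
  have T2: "4 / real M \<le> 4 / w"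
  proof -
    have "sqrt (real m) \<le> real m" using m by (simp add: real_sqrt_le_iff') (metis of_nat_le_iff le_square le_refl power2_eq_square of_nat_mult)
    hence "w \<le> real m * real m" unfolding w_def by (intro mult_left_mono) auto
    also have "\<dots> \<le> real M" unfolding M_def by (simp add: power2_eq_square sum_nonneg add_nonneg_nonneg)
    finally show ?thesis using w0 by (intro divide_left_mono) auto
  qed
  have T3: "E2 \<le> 4096 / gam^2 / w"
  proof -
    have gm: "0 < gam * (real m / 32)" using gam m by simp
    have "E2 \<le> 4 / (gam * (real m / 32))^2" unfolding E2_def
      using exp_neg_le[OF gm] by simp
    also have "\<dots> = 4096 / gam^2 / (real m * real m)" by (simp add: power2_eq_square field_simps)
    also have "\<dots> \<le> 4096 / gam^2 / w"
    proof -
      have "sqrt (real m) \<le> real m" using m by (simp add: real_sqrt_le_iff') (metis of_nat_le_iff le_square le_refl power2_eq_square of_nat_mult)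
      hence "w \<le> real m * real m" unfolding w_def by (intro mult_left_mono) auto
      thus ?thesis using w0 gam by (intro divide_left_mono) auto
    qed
    finally show ?thesis .
  qed
  have "measure_pmf.prob (Pi_pmf J 0 (\<lambda>_. p)) {xi. (\<Sum>j\<in>J. int j * xi j) = s}
        \<le> 4 / w + 4 / (pi * sqrt (gam / 288)) / w + 4096 / gam^2 / w"
    using F S1 T1 T2 T3 by linarith
  also have "\<dots> \<le> Kc gam / w"
    unfolding Kc_def using w0 by (simp add: field_simps)
  finally show ?thesis unfolding w_def .
qed



lemma anti_conc:
  fixes p :: "int pmf" and gam :: real and J :: "nat set" and k m c :: nat and s :: int
  assumes supp: "set_pmf p \<subseteq> {-1, 0, 1}"
    and gam: "0 < gam"
    and chfb: "\<And>t. cmod (chf p t) \<le> exp (- gam * sin t ^ 2)"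
    and J: "finite J" and k: "1 \<le> k" and m: "1 \<le> m"
    and AP: "\<And>i. i < m \<Longrightarrow> c + i * k \<in> J"
  shows "measure_pmf.prob (Pi_pmf J 0 (\<lambda>_. p)) {xi. (\<Sum>j\<in>J. int j * xi j) = s}
         \<le> Kc gam / (real m * sqrt (real m))"
proof (cases "4 \<le> m")
  case True thus ?thesis by (rule anti_conc_large[OF supp gam chfb J k _ AP])
next
  case False
  have "sqrt (real m) \<le> 2"
  proof -
    have "real m \<le> 2^2" using False by simp
    thus ?thesis by (simp add: real_sqrt_le_iff' real_le_lsqrt)
  qed
  hence "real m * sqrt (real m) \<le> 3 * 2" using False by (intro mult_mono) auto
  hence w8: "real m * sqrt (real m) \<le> 8" by simp
  have w0: "0 < real m * sqrt (real m)" using m by simp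
  have "measure_pmf.prob (Pi_pmf J 0 (\<lambda>_. p)) {xi. (\<Sum>j\<in>J. int j * xi j) = s} \<le> 1" by simp
  also have "1 \<le> 8 / (real m * sqrt (real m))" using w8 w0 by (simp add: field_simps)
  also have "\<dots> \<le> Kc gam / (real m * sqrt (real m))"
    using Kc_ge[OF gam] w0 by (intro divide_right_mono) auto
  finally show ?thesis .
qed

lemma integral_pair_pmf_finite':
  fixes f :: "'a \<times> 'b \<Rightarrow> real"
  assumes A: "finite (set_pmf A)" and B: "finite (set_pmf B)"
  shows "measure_pmf.expectation (pair_pmf A B) f =
         measure_pmf.expectation A (\<lambda>a. measure_pmf.expectation B (\<lambda>b. f (a, b)))"
proof -
  have "measure_pmf.expectation (pair_pmf A B) f = (\<Sum>z\<in>set_pmf A \<times> set_pmf B. pmf (pair_pmf A B) z *\<^sub>R f z)"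
    by (rule integral_measure_pmf) (use A B in auto)
  also have "\<dots> = (\<Sum>(a,b)\<in>set_pmf A \<times> set_pmf B. pmf A a *\<^sub>R (pmf B b *\<^sub>R f (a, b)))"
    by (intro sum.cong refl) (auto simp: pmf_pair)
  also have "\<dots> = (\<Sum>a\<in>set_pmf A. \<Sum>b\<in>set_pmf B. pmf A a *\<^sub>R (pmf B b *\<^sub>R f (a, b)))"
    by (simp add: sum.cartesian_product)
  also have "\<dots> = (\<Sum>a\<in>set_pmf A. pmf A a *\<^sub>R measure_pmf.expectation B (\<lambda>b. f (a, b)))"
  proof (intro sum.cong refl)
    fix a
    have "measure_pmf.expectation B (\<lambda>b. f (a, b)) = (\<Sum>b\<in>set_pmf B. pmf B b *\<^sub>R f (a, b))"
      by (rule integral_measure_pmf) (use B in auto)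
    thus "(\<Sum>b\<in>set_pmf B. pmf A a *\<^sub>R (pmf B b *\<^sub>R f (a, b))) = pmf A a *\<^sub>R measure_pmf.expectation B (\<lambda>b. f (a, b))"
      by (simp add: scaleR_sum_right sum_distrib_left)
  qed
  also have "\<dots> = measure_pmf.expectation A (\<lambda>a. measure_pmf.expectation B (\<lambda>b. f (a, b)))"
    by (rule integral_measure_pmf[symmetric]) (use A in auto)
  finally show ?thesis .
qed

lemma prob_pair_pmf_finite:
  assumes A: "finite (set_pmf A)" and B: "finite (set_pmf B)"
  shows "measure_pmf.prob (pair_pmf A B) T =
         measure_pmf.expectation A (\<lambda>a. measure_pmf.prob B {b. (a, b) \<in> T})"
proof -
  have "measure_pmf.prob (pair_pmf A B) T = measure_pmf.expectation (pair_pmf A B) (indicator T)"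
    by simp
  also have "\<dots> = measure_pmf.expectation A (\<lambda>a. measure_pmf.expectation B (\<lambda>b. indicator T (a, b)))"
    by (rule integral_pair_pmf_finite'[OF A B])
  also have "\<dots> = measure_pmf.expectation A (\<lambda>a. measure_pmf.prob B {b. (a, b) \<in> T})"
  proof (intro Bochner_Integration.integral_cong refl)
    fix a
    have "(\<lambda>b. indicator T (a, b) :: real) = indicator {b. (a, b) \<in> T}"
      by (auto simp: indicator_def)
    thus "measure_pmf.expectation B (\<lambda>b. indicator T (a, b)) = measure_pmf.prob B {b. (a, b) \<in> T}"
      by simp
  qed
  finally show ?thesis .
qed

lemma cond_step:
  fixes A B :: "nat set" and E :: "(nat \<Rightarrow> int) set" and S :: "(nat \<Rightarrow> int) \<Rightarrow> int"
    and Mx :: real and p :: "int pmf"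
  assumes A: "finite A" and BA: "B \<subseteq> A" and pf: "finite (set_pmf p)"
    and loc: "\<And>xi xi'. (\<forall>j\<in>B. xi j = xi' j) \<Longrightarrow> S xi = S xi'"
    and bd: "\<And>s. measure_pmf.prob (Pi_pmf B 0 (\<lambda>_. p)) {f. S f = s} \<le> Mx"
    and key: "\<And>xi xi'. xi \<in> E \<Longrightarrow> xi' \<in> E \<Longrightarrow> (\<forall>j. j \<notin> B \<longrightarrow> xi j = xi' j) \<Longrightarrow> S xi = S xi'"
  shows "measure_pmf.prob (Pi_pmf A 0 (\<lambda>_. p)) E
         \<le> Mx * measure_pmf.prob (Pi_pmf A 0 (\<lambda>_. p)) {xi. \<exists>z. (\<lambda>x. if x \<in> B then z x else xi x) \<in> E}"
proof -
  define Q1 where "Q1 = Pi_pmf B 0 (\<lambda>_. p)"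
  define Q2 where "Q2 = Pi_pmf (A - B) 0 (\<lambda>_. p)"
  define mg where "mg = (\<lambda>(g::nat\<Rightarrow>int, f::nat\<Rightarrow>int) x. if x \<in> A - B then g x else f x)"
  define h where "h = (\<lambda>(g::nat\<Rightarrow>int) (z::nat\<Rightarrow>int) x. if x \<in> B then z x else if x \<in> A - B then g x else (0::int))"
  define E' where "E' = {xi. \<exists>z. (\<lambda>x. if x \<in> B then z x else xi x) \<in> E}"
  have Bf: "finite B" using A BA finite_subset by blast
  have Q1f: "finite (set_pmf Q1)" unfolding Q1_def by (rule finite_set_Pi_pmf) (use Bf pf in auto)
  have Q2f: "finite (set_pmf Q2)" unfolding Q2_def by (rule finite_set_Pi_pmf) (use A pf in auto)
  have Qeq: "Pi_pmf A 0 (\<lambda>_. p) = map_pmf mg (pair_pmf Q2 Q1)"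
  proof -
    have "Pi_pmf ((A - B) \<union> B) 0 (\<lambda>_. p) = map_pmf mg (pair_pmf Q2 Q1)"
      unfolding mg_def Q1_def Q2_def by (rule Pi_pmf_union) (use A Bf in auto)
    moreover have "(A - B) \<union> B = A" using BA by auto
    ultimately show ?thesis by simp
  qed
  have supp1: "f x = 0" if "f \<in> set_pmf Q1" "x \<notin> B" for f x
    using that set_Pi_pmf_subset[OF Bf, of 0 "\<lambda>_. p"] unfolding Q1_def by auto
  have mgh: "mg (g, f) = h g f" if "f \<in> set_pmf Q1" for g f
    using supp1[OF that] unfolding mg_def h_def by (auto simp: fun_eq_iff)
  have hE': "(mg (g, f) \<in> E') = (\<exists>z. h g z \<in> E)" if "f \<in> set_pmf Q1" for g f
  proof -
    have "(\<lambda>x. if x \<in> B then z x else mg (g, f) x) = h g z" for z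
      using supp1[OF that] unfolding mg_def h_def by (auto simp: fun_eq_iff)
    thus ?thesis unfolding E'_def by simp
  qed
  have L: "measure_pmf.prob (Pi_pmf A 0 (\<lambda>_. p)) E =
           measure_pmf.expectation Q2 (\<lambda>g. measure_pmf.prob Q1 {f. mg (g, f) \<in> E})"
    unfolding Qeq by (simp add: prob_pair_pmf_finite[OF Q2f Q1f])
  have R: "measure_pmf.prob (Pi_pmf A 0 (\<lambda>_. p)) E' =
           measure_pmf.expectation Q2 (\<lambda>g. indicator {g. \<exists>z. h g z \<in> E} g)"
  proof -
    have "measure_pmf.prob (Pi_pmf A 0 (\<lambda>_. p)) E' =
           measure_pmf.expectation Q2 (\<lambda>g. measure_pmf.prob Q1 {f. mg (g, f) \<in> E'})"
      unfolding Qeq by (simp add: prob_pair_pmf_finite[OF Q2f Q1f])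
    also have "\<dots> = measure_pmf.expectation Q2 (\<lambda>g. indicator {g. \<exists>z. h g z \<in> E} g)"
    proof (intro Bochner_Integration.integral_cong refl)
      fix g
      show "measure_pmf.prob Q1 {f. mg (g, f) \<in> E'} = indicator {g. \<exists>z. h g z \<in> E} g"
      proof (cases "\<exists>z. h g z \<in> E")
        case True
        have "measure_pmf.prob Q1 {f. mg (g, f) \<in> E'} = measure_pmf.prob Q1 UNIV"
          by (rule measure_prob_cong_0) (use hE' True in \<open>auto simp: pmf_eq_0_set_pmf\<close>)
        thus ?thesis using True by simp
      next
        case False
        have "measure_pmf.prob Q1 {f. mg (g, f) \<in> E'} = measure_pmf.prob Q1 {}"
          by (rule measure_prob_cong_0) (use hE' False in \<open>auto simp: pmf_eq_0_set_pmf\<close>)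
        thus ?thesis using False by simp
      qed
    qed
    finally show ?thesis .
  qed
  have inner: "measure_pmf.prob Q1 {f. mg (g, f) \<in> E} \<le> Mx * indicator {g. \<exists>z. h g z \<in> E} g" for g
  proof (cases "\<exists>z. h g z \<in> E")
    case True
    then obtain z0 where z0: "h g z0 \<in> E" by blast
    have "measure_pmf.prob Q1 {f. mg (g, f) \<in> E} \<le> measure_pmf.prob Q1 {f. S f = S z0}"
    proof -
      have "measure_pmf.prob Q1 {f. mg (g, f) \<in> E} = measure_pmf.prob Q1 ({f. mg (g, f) \<in> E} \<inter> set_pmf Q1)"
        by (simp add: measure_Int_set_pmf)
      also have "\<dots> \<le> measure_pmf.prob Q1 {f. S f = S z0}"
      proof (rule measure_pmf.finite_measure_mono)
        show "{f. mg (g, f) \<in> E} \<inter> set_pmf Q1 \<subseteq> {f. S f = S z0}"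
        proof
          fix f assume f: "f \<in> {f. mg (g, f) \<in> E} \<inter> set_pmf Q1"
          hence hf: "h g f \<in> E" using mgh by auto
          have "S (h g f) = S (h g z0)"
            by (rule key[OF hf z0]) (auto simp: h_def)
          moreover have "S (h g f) = S f" by (rule loc) (auto simp: h_def)
          moreover have "S (h g z0) = S z0" by (rule loc) (auto simp: h_def)
          ultimately show "f \<in> {f. S f = S z0}" by simp
        qed
      qed simp
      finally show ?thesis .
    qed
    also have "\<dots> \<le> Mx" using bd unfolding Q1_def by blast
    finally show ?thesis using True by simp
  next
    case False
    have "measure_pmf.prob Q1 {f. mg (g, f) \<in> E} = measure_pmf.prob Q1 {}"
      by (rule measure_prob_cong_0) (use mgh False in \<open>auto simp: pmf_eq_0_set_pmf\<close>)
    thus ?thesis using False by simp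
  qed
  have "measure_pmf.prob (Pi_pmf A 0 (\<lambda>_. p)) E \<le>
        measure_pmf.expectation Q2 (\<lambda>g. Mx * indicator {g. \<exists>z. h g z \<in> E} g)"
    unfolding L by (intro integral_mono inner) (use Q2f in \<open>auto intro: integrable_measure_pmf_finite\<close>)
  also have "\<dots> = Mx * measure_pmf.prob (Pi_pmf A 0 (\<lambda>_. p)) E'"
    unfolding R by simp
  finally show ?thesis unfolding E'_def .
qed



lemma cond_prod:
  fixes A :: "nat set" and Is :: "nat \<Rightarrow> nat set" and S :: "nat \<Rightarrow> (nat \<Rightarrow> int) \<Rightarrow> int"
    and Mx :: "nat \<Rightarrow> real" and p :: "int pmf"
  assumes A: "finite A" and pf: "finite (set_pmf p)"
    and sub: "\<And>r. r < d \<Longrightarrow> Is r \<subseteq> A"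
    and disj: "\<And>r r'. r < d \<Longrightarrow> r' < d \<Longrightarrow> r \<noteq> r' \<Longrightarrow> Is r \<inter> Is r' = {}"
    and loc: "\<And>r xi xi'. r < d \<Longrightarrow> (\<forall>j\<in>Is r. xi j = xi' j) \<Longrightarrow> S r xi = S r xi'"
    and bd: "\<And>r s. r < d \<Longrightarrow> measure_pmf.prob (Pi_pmf (Is r) 0 (\<lambda>_. p)) {f. S r f = s} \<le> Mx r"
    and key: "\<And>xi xi'. xi \<in> E \<Longrightarrow> xi' \<in> E \<Longrightarrow> (\<forall>j. j \<notin> (\<Union>r<d. Is r) \<longrightarrow> xi j = xi' j)
               \<Longrightarrow> (\<forall>r<d. S r xi = S r xi')"
  shows "measure_pmf.prob (Pi_pmf A 0 (\<lambda>_. p)) E \<le> (\<Prod>r<d. Mx r)"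
  using sub disj loc bd key
proof (induction d arbitrary: E)
  case 0
  show ?case by simp
next
  case (Suc d)
  define E' where "E' = {xi. \<exists>z. (\<lambda>x. if x \<in> Is d then z x else xi x) \<in> E}"
  have Mx0: "0 \<le> Mx d"
    using Suc.prems(4)[of d 0] by (meson order.trans measure_nonneg lessI)
  have step: "measure_pmf.prob (Pi_pmf A 0 (\<lambda>_. p)) E \<le> Mx d * measure_pmf.prob (Pi_pmf A 0 (\<lambda>_. p)) E'"
    unfolding E'_def
  proof (rule cond_step[OF A _ pf])
    show "Is d \<subseteq> A" using Suc.prems(1) by simp
    show "S d xi = S d xi'" if "\<forall>j\<in>Is d. xi j = xi' j" for xi xi'
      using Suc.prems(3)[of d xi xi'] that by simp
    show "measure_pmf.prob (Pi_pmf (Is d) 0 (\<lambda>_. p)) {f. S d f = s} \<le> Mx d" for s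
      using Suc.prems(4)[of d s] by simp
    show "S d xi = S d xi'" if "xi \<in> E" "xi' \<in> E" "\<forall>j. j \<notin> Is d \<longrightarrow> xi j = xi' j" for xi xi'
    proof -
      have "\<forall>j. j \<notin> (\<Union>r<Suc d. Is r) \<longrightarrow> xi j = xi' j" using that(3) by auto
      thus ?thesis using Suc.prems(5)[OF that(1,2)] by simp
    qed
  qed
  have IH: "measure_pmf.prob (Pi_pmf A 0 (\<lambda>_. p)) E' \<le> (\<Prod>r<d. Mx r)"
  proof (rule Suc.IH)
    show "\<And>r. r < d \<Longrightarrow> Is r \<subseteq> A" using Suc.prems(1) by simp
    show "\<And>r r'. r < d \<Longrightarrow> r' < d \<Longrightarrow> r \<noteq> r' \<Longrightarrow> Is r \<inter> Is r' = {}" using Suc.prems(2) by simp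
    show "\<And>r xi xi'. r < d \<Longrightarrow> \<forall>j\<in>Is r. xi j = xi' j \<Longrightarrow> S r xi = S r xi'" using Suc.prems(3) by simp
    show "\<And>r s. r < d \<Longrightarrow> measure_pmf.prob (Pi_pmf (Is r) 0 (\<lambda>_. p)) {f. S r f = s} \<le> Mx r"
      using Suc.prems(4) by simp
    fix xi xi' assume xi: "xi \<in> E'" and xi': "xi' \<in> E'" and ag: "\<forall>j. j \<notin> (\<Union>r<d. Is r) \<longrightarrow> xi j = xi' j"
    obtain z where z: "(\<lambda>x. if x \<in> Is d then z x else xi x) \<in> E" using xi unfolding E'_def by blast
    obtain z' where z': "(\<lambda>x. if x \<in> Is d then z' x else xi' x) \<in> E" using xi' unfolding E'_def by blast
    have ag2: "\<forall>j. j \<notin> (\<Union>r<Suc d. Is r) \<longrightarrow> (\<lambda>x. if x \<in> Is d then z x else xi x) j = (\<lambda>x. if x \<in> Is d then z' x else xi' x) j"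
      using ag by (auto simp: lessThan_Suc)
    have k2: "\<forall>r<Suc d. S r (\<lambda>x. if x \<in> Is d then z x else xi x) = S r (\<lambda>x. if x \<in> Is d then z' x else xi' x)"
      by (rule Suc.prems(5)[OF z z' ag2])
    show "\<forall>r<d. S r xi = S r xi'"
    proof (intro allI impI)
      fix r assume r: "r < d"
      have dj: "Is r \<inter> Is d = {}" using Suc.prems(2)[of r d] r by simp
      have "S r xi = S r (\<lambda>x. if x \<in> Is d then z x else xi x)"
        by (rule Suc.prems(3)) (use r dj in auto)
      also have "\<dots> = S r (\<lambda>x. if x \<in> Is d then z' x else xi' x)" using k2 r by simp
      also have "\<dots> = S r xi'"
        by (rule Suc.prems(3)) (use r dj in auto)
      finally show "S r xi = S r xi'" .
    qed
  qed
  have "measure_pmf.prob (Pi_pmf A 0 (\<lambda>_. p)) E \<le> Mx d * (\<Prod>r<d. Mx r)"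
    using step mult_left_mono[OF IH Mx0] by linarith
  thus ?case by (simp add: mult.commute)
qed

lemma pderiv_sum': "pderiv (\<Sum>x\<in>A. f x) = (\<Sum>x\<in>A. pderiv (f x))"
  by (induct A rule: infinite_finite_induct) (auto simp: pderiv_add)

lemma poly_pderiv_rand:
  "poly (pderiv (rand_poly n xi)) \<alpha> = (\<Sum>j\<le>n. of_nat j * of_int (xi j) * \<alpha> ^ (j - 1))"
  unfolding rand_poly_def by (simp add: pderiv_sum' poly_sum pderiv_monom poly_monom)

lemma lin_indep:
  fixes \<alpha> :: complex and D :: "nat \<Rightarrow> int"
  assumes sum0: "(\<Sum>r<d. of_int (D r) * \<alpha> ^ r) = 0" and dle: "d \<le> alg_deg \<alpha>"
  shows "\<forall>r<d. D r = 0"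
proof -
  define q :: "rat poly" where "q = (\<Sum>r<d. monom (of_int (D r)) r)"
  have mq: "map_poly (of_rat :: rat \<Rightarrow> complex) q = (\<Sum>r<d. monom (of_int (D r)) r)"
    by (rule poly_eqI) (simp add: q_def coeff_map_poly coeff_sum of_rat_sum coeff_monom if_distrib cong: if_cong)
  have pq: "poly (map_poly of_rat q) \<alpha> = 0"
    unfolding mq using sum0 by (simp add: poly_sum poly_monom)
  have "q = 0"
  proof (rule ccontr)
    assume q0: "q \<noteq> 0"
    hence d0: "0 < d" unfolding q_def by (cases d) auto
    have "degree q \<le> d - 1" unfolding q_def
      by (rule degree_sum_le) (auto intro: order.trans[OF degree_monom_le])
    moreover have "alg_deg \<alpha> \<le> degree q"
      unfolding alg_deg_def by (rule Least_le) (use q0 pq in blast)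
    ultimately show False using dle d0 by linarith
  qed
  show ?thesis
  proof (intro allI impI)
    fix r assume r: "r < d"
    have "coeff q r = of_int (D r)" unfolding q_def by (simp add: coeff_sum coeff_monom r)
    thus "D r = 0" using \<open>q = 0\<close> by simp
  qed
qed

lemma alg_deg_le:
  fixes \<alpha> :: complex
  assumes k: "1 \<le> k" and ak: "\<alpha> ^ k = 1"
  shows "alg_deg \<alpha> \<le> k"
proof -
  define q :: "rat poly" where "q = monom 1 k - 1"
  have mq: "map_poly (of_rat :: rat \<Rightarrow> complex) q = monom 1 k - 1"
    by (rule poly_eqI) (simp add: q_def coeff_map_poly coeff_monom coeff_1 of_rat_diff if_distrib cong: if_cong)
  have dq: "degree q = k"
  proof -
    have "q = monom 1 k + (-1)" unfolding q_def by simp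
    also have "degree \<dots> = degree (monom (1::rat) k)"
      by (rule degree_add_eq_left) (use k in \<open>simp add: degree_monom_eq\<close>)
    finally show ?thesis by (simp add: degree_monom_eq)
  qed
  have q0: "q \<noteq> 0" using dq k by auto
  have "poly (map_poly of_rat q) \<alpha> = 0" unfolding mq using ak by (simp add: poly_monom)
  hence "alg_deg \<alpha> \<le> degree q"
    unfolding alg_deg_def by (intro Least_le) (use q0 in blast)
  thus ?thesis using dq by simp
qed



lemma pow_mod_k:
  fixes \<alpha> :: complex
  assumes "\<alpha> ^ k = 1"
  shows "\<alpha> ^ n = \<alpha> ^ (n mod k)"
proof -
  have "\<alpha> ^ n = \<alpha> ^ (k * (n div k) + n mod k)" by simp
  also have "\<dots> = (\<alpha> ^ k) ^ (n div k) * \<alpha> ^ (n mod k)" by (simp only: power_add power_mult)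
  also have "\<dots> = \<alpha> ^ (n mod k)" using assms by simp
  finally show ?thesis .
qed

lemma key_lemma:
  fixes \<alpha> :: complex and n k d :: nat and xi xi' :: "nat \<Rightarrow> int"
  assumes k: "1 \<le> k" and ak: "\<alpha> ^ k = 1" and dd: "d = alg_deg \<alpha>"
    and E1: "poly (pderiv (rand_poly n xi)) \<alpha> = 0" and E2: "poly (pderiv (rand_poly n xi')) \<alpha> = 0"
    and ag: "\<forall>j. j \<notin> (\<Union>r<d. {j \<in> {1..n}. (j - 1) mod k = r}) \<longrightarrow> xi j = xi' j"
  shows "\<forall>r<d. (\<Sum>j\<in>{j \<in> {1..n}. (j - 1) mod k = r}. int j * xi j) = (\<Sum>j\<in>{j \<in> {1..n}. (j - 1) mod k = r}. int j * xi' j)"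
proof -
  define Is where "Is = (\<lambda>r. {j \<in> {1..n}. (j - 1) mod k = r})"
  define U where "U = (\<Union>r<d. Is r)"
  define g where "g = (\<lambda>j. of_nat j * of_int (xi j - xi' j) * \<alpha> ^ (j - 1) :: complex)"
  have fin: "finite (Is r)" for r unfolding Is_def by simp
  have "0 = poly (pderiv (rand_poly n xi)) \<alpha> - poly (pderiv (rand_poly n xi')) \<alpha>" using E1 E2 by simp
  also have "\<dots> = (\<Sum>j\<le>n. g j)"
    unfolding poly_pderiv_rand g_def by (simp add: sum_subtractf[symmetric] algebra_simps)
  also have "\<dots> = (\<Sum>j\<in>U. g j)"
  proof (rule sum.mono_neutral_right)
    show "U \<subseteq> {..n}" unfolding U_def Is_def by auto
    show "\<forall>j\<in>{..n} - U. g j = 0" using ag unfolding g_def U_def Is_def by auto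
  qed simp
  also have "\<dots> = (\<Sum>r<d. \<Sum>j\<in>Is r. g j)"
    unfolding U_def by (rule sum.UNION_disjoint) (auto simp: fin Is_def)
  also have "\<dots> = (\<Sum>r<d. of_int ((\<Sum>j\<in>Is r. int j * xi j) - (\<Sum>j\<in>Is r. int j * xi' j)) * \<alpha> ^ r)"
  proof (rule sum.cong[OF refl])
    fix r assume r: "r \<in> {..<d}"
    have "(\<Sum>j\<in>Is r. g j) = (\<Sum>j\<in>Is r. of_int (int j * xi j - int j * xi' j) * \<alpha> ^ r)"
    proof (rule sum.cong[OF refl])
      fix j assume j: "j \<in> Is r"
      have "\<alpha> ^ (j - 1) = \<alpha> ^ ((j - 1) mod k)" by (rule pow_mod_k[OF ak])
      also have "(j - 1) mod k = r" using j unfolding Is_def by simp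
      finally show "g j = of_int (int j * xi j - int j * xi' j) * \<alpha> ^ r"
        unfolding g_def by (simp add: algebra_simps)
    qed
    also have "\<dots> = of_int (\<Sum>j\<in>Is r. int j * xi j - int j * xi' j) * \<alpha> ^ r"
      by (simp add: sum_distrib_right)
    also have "\<dots> = of_int ((\<Sum>j\<in>Is r. int j * xi j) - (\<Sum>j\<in>Is r. int j * xi' j)) * \<alpha> ^ r"
      by (simp add: sum_subtractf)
    finally show "(\<Sum>j\<in>Is r. g j) = of_int ((\<Sum>j\<in>Is r. int j * xi j) - (\<Sum>j\<in>Is r. int j * xi' j)) * \<alpha> ^ r" .
  qed
  finally have "(\<Sum>r<d. of_int ((\<Sum>j\<in>Is r. int j * xi j) - (\<Sum>j\<in>Is r. int j * xi' j)) * \<alpha> ^ r) = 0" by simp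
  from lin_indep[OF this] dd show ?thesis unfolding Is_def by simp
qed



theorem lemma1p4:
  fixes p :: "int pmf"
  assumes supp: "set_pmf p \<subseteq> {-1, 0, 1}"
    and maxp: "\<forall>x\<in>{-1, 0, 1::int}. pmf p x < 1 / sqrt 3"
  shows "\<exists>C>0. \<forall>n \<ge> 1. \<forall>(\<alpha>::complex) (k::nat).
           k \<ge> 1 \<longrightarrow> \<alpha> ^ k = 1 \<longrightarrow> k \<le> n \<longrightarrow>
           measure_pmf.prob (Pi_pmf {0..n} 0 (\<lambda>_. p))
              {xi. poly (pderiv (rand_poly n xi)) \<alpha> = 0}
           \<le> (C / real (n div k)) powr (3 * real (alg_deg \<alpha>) / 2)"
proof -
  define p0 where "p0 = pmf p 0"
  define p1 where "p1 = pmf p 1"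
  define pm where "pm = pmf p (-1)"
  define gam where "gam = (pmf p 0 * (pmf p 1 + pmf p (-1)) + 4 * pmf p 1 * pmf p (-1)) / 2"
  have pf: "finite (set_pmf p)" using supp finite_subset by blast
  have sum1: "p0 + p1 + pm = 1"
  proof -
    have "(\<Sum>x\<in>{-1, 0, 1::int}. pmf p x) = 1" by (rule sum_pmf_eq_1) (use supp in auto)
    thus ?thesis unfolding p0_def p1_def pm_def by simp
  qed
  have s3: "1 / sqrt 3 < (1::real)" by simp
  have l0: "p0 < 1 / sqrt 3" using maxp unfolding p0_def by simp
  have l1: "p1 < 1 / sqrt 3" using maxp unfolding p1_def by simp
  have l2: "pm < 1 / sqrt 3" using maxp unfolding pm_def by simp
  have lt: "p0 < 1" "p1 < 1" "pm < 1" using l0 l1 l2 s3 by linarith+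
  have nn: "0 \<le> p0" "0 \<le> p1" "0 \<le> pm" unfolding p0_def p1_def pm_def by simp_all
  have gam0: "0 < gam"
  proof (cases "p0 = 0")
    case True
    hence "0 < p1" "0 < pm" using sum1 lt by linarith+
    hence "0 < 4 * p1 * pm" by simp
    moreover have "0 \<le> p0 * (p1 + pm)" using nn by simp
    ultimately have "0 < p0 * (p1 + pm) + 4 * p1 * pm" by (intro add_nonneg_pos)
    thus ?thesis unfolding gam_def p0_def[symmetric] p1_def[symmetric] pm_def[symmetric] by simp
  next
    case False
    hence "0 < p0" using nn by simp
    moreover have "0 < p1 + pm" using sum1 lt by linarith
    ultimately have "0 < p0 * (p1 + pm)" by simp
    moreover have "0 \<le> 4 * p1 * pm" using nn by simp
    ultimately have "0 < p0 * (p1 + pm) + 4 * p1 * pm" by (intro add_pos_nonneg)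
    thus ?thesis unfolding gam_def p0_def[symmetric] p1_def[symmetric] pm_def[symmetric] by simp
  qed
  have chfb: "cmod (chf p t) \<le> exp (- gam * sin t ^ 2)" for t
    using chf_norm_bound[OF supp, of t] unfolding gam_def by simp
  define K where "K = Kc gam"
  have K8: "8 \<le> K" unfolding K_def by (rule Kc_ge[OF gam0])
  define C where "C = K powr (2/3)"
  have C0: "0 < C" unfolding C_def using K8 by simp
  show ?thesis
  proof (intro exI[of _ C] conjI allI impI)
    show "0 < C" by (rule C0)
    fix n :: nat and \<alpha> :: complex and k :: nat
    assume n: "1 \<le> n" and k: "1 \<le> k" and ak: "\<alpha> ^ k = 1" and kn: "k \<le> n"
    define m where "m = n div k"
    have m1: "1 \<le> m"
    proof -
      have "k div k \<le> n div k" by (rule div_le_mono[OF kn])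
      thus ?thesis unfolding m_def using k by simp
    qed
    have mk: "m * k \<le> n" unfolding m_def by simp
    define d where "d = alg_deg \<alpha>"
    have dk: "d \<le> k" unfolding d_def by (rule alg_deg_le[OF k ak])
    define Is where "Is = (\<lambda>r. {j \<in> {1..n}. (j - 1) mod k = r})"
    define S where "S = (\<lambda>r (xi::nat \<Rightarrow> int). \<Sum>j\<in>Is r. int j * xi j)"
    define E where "E = {xi. poly (pderiv (rand_poly n xi)) \<alpha> = 0}"
    have main: "measure_pmf.prob (Pi_pmf {0..n} 0 (\<lambda>_. p)) E \<le> (\<Prod>r<d. K / (real m * sqrt (real m)))"
    proof (rule cond_prod[where Is = Is and S = S])
      show "finite {0..n}" by simp
      show "finite (set_pmf p)" by (rule pf)
      show "\<And>r. r < d \<Longrightarrow> Is r \<subseteq> {0..n}" unfolding Is_def by auto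
      show "\<And>r r'. r < d \<Longrightarrow> r' < d \<Longrightarrow> r \<noteq> r' \<Longrightarrow> Is r \<inter> Is r' = {}" unfolding Is_def by auto
      show "\<And>r xi xi'. r < d \<Longrightarrow> \<forall>j\<in>Is r. xi j = xi' j \<Longrightarrow> S r xi = S r xi'"
        unfolding S_def by (intro sum.cong) auto
      show "measure_pmf.prob (Pi_pmf (Is r) 0 (\<lambda>_. p)) {f. S r f = s} \<le> K / (real m * sqrt (real m))"
        if r: "r < d" for r s
        unfolding S_def K_def
      proof (rule anti_conc[OF supp gam0 chfb _ k m1])
        show "finite (Is r)" unfolding Is_def by simp
        fix i assume i: "i < m"
        have rk: "r < k" using r dk by simp
        have "r + 1 + i * k \<le> k + i * k" using rk by simp
        also have "\<dots> = (i + 1) * k" by simp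
        also have "\<dots> \<le> m * k" using i by (intro mult_right_mono) auto
        finally have le: "r + 1 + i * k \<le> n" using mk by simp
        have "(r + 1 + i * k - 1) mod k = r" using rk by simp
        thus "r + 1 + i * k \<in> Is r" unfolding Is_def using le by simp
      qed
      show "\<forall>r<d. S r xi = S r xi'"
        if "xi \<in> E" "xi' \<in> E" "\<forall>j. j \<notin> (\<Union>r<d. Is r) \<longrightarrow> xi j = xi' j" for xi xi'
        using key_lemma[OF k ak d_def, of n xi xi'] that unfolding E_def S_def Is_def by simp
    qed
    also have "\<dots> = (K / (real m * sqrt (real m))) ^ d" by simp
    also have "\<dots> = (C / real m) powr (3 * real d / 2)"
    proof -
      have mpos: "0 < real m" using m1 by simp
      have "real m powr (3/2) = real m * sqrt (real m)"
      proof -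
        have "real m powr (3/2) = real m powr (1 + 1/2)" by simp
        also have "\<dots> = real m powr 1 * real m powr (1/2)" by (rule powr_add)
        also have "\<dots> = real m * sqrt (real m)" using mpos by (simp add: powr_half_sqrt)
        finally show ?thesis .
      qed
      moreover have "C powr (3/2) = K" unfolding C_def using K8 by (simp add: powr_powr)
      ultimately have e: "(C / real m) powr (3/2) = K / (real m * sqrt (real m))"
        using C0 mpos by (simp add: powr_divide)
      have "(C / real m) powr (3 * real d / 2) = ((C / real m) powr (3/2)) powr real d"
        by (simp add: powr_powr)
      also have "\<dots> = (K / (real m * sqrt (real m))) ^ d"
        unfolding e using K8 mpos by (simp add: powr_realpow)
      finally show ?thesis by simp
    qed
    finally show "measure_pmf.prob (Pi_pmf {0..n} 0 (\<lambda>_. p)) {xi. poly (pderiv (rand_poly n xi)) \<alpha> = 0}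
        \<le> (C / real (n div k)) powr (3 * real (alg_deg \<alpha>) / 2)"
      unfolding E_def m_def d_def .
  qed
qed


end
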